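(* Let $H$ be a real Hilbert space, $C\subseteq H$ a nonempty closed convex set with metric projection $P_C$, and $F\colon H\to H$ a mapping that is strongly monotone, i.e. there is $m>0$ with $\langle F(x)-F(y),x-y\rangle\ge m\|x-y\|^2$ for all $x,y\in H$, and Lipschitz continuous with constant $L>0$. Assume the variational inequality "find $x^*\in C$ with $\langle F(x^* ),x-x^*\rangle\ge 0$ for all $x\in C$" has a solution, and let $z$ denote its (unique) solution. Choose $x_0=y_0\in H$ and $\lambda\in\bigl(0,\frac{\sqrt2-1}{L}\bigr)$, and define for $n\ge0$ $$x_{n+1}=P_C(x_n-\lambda F(y_n)),\qquad y_{n+1}=2x_{n+1}-x_n.$$ Then $(x_n)$ converges to $z$ at least R-linearly, i.e. there exist $c>0$ and $q\in(0,1)$ such that $\|x_n-z\|\le c\,q^n$ for all $n$.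
   Context: $P_C(x)$ denotes the unique nearest point of $C$ to $x$. *)

theory Defs
  imports "HOL-Analysis.Analysis"
begin

definition metric_proj :: "'a::real_inner set \<Rightarrow> 'a \<Rightarrow> 'a" where
  "metric_proj C x = (THE p. p \<in> C \<and> (\<forall>u\<in>C. dist x p \<le> dist x u))"

end

theory Submission imports Defs begin

lemma polar2: fixes a b c :: "'a::real_inner"
  shows "2 * inner (a - b) (c - b) = (norm (a-b))\<^sup>2 + (norm (c-b))\<^sup>2 - (norm (a - c))\<^sup>2"
  by (simp add: power2_norm_eq_inner inner_diff_left inner_diff_right inner_commute algebra_simps)

lemma parallelo: fixes a b :: "'a::real_inner"
  shows "(norm (a - b))\<^sup>2 + (norm (a + b))\<^sup>2 = 2 * (norm a)\<^sup>2 + 2 * (norm b)\<^sup>2"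
  by (simp add: power2_norm_eq_inner inner_diff_left inner_diff_right inner_add_left inner_add_right inner_commute algebra_simps)

lemma proj_exists:
  fixes C :: "'a::{real_inner,complete_space} set"
  assumes "C \<noteq> {}" "closed C" "convex C"
  shows "\<exists>p\<in>C. \<forall>u\<in>C. dist w p \<le> dist w u"
proof -
  define d where "d = infdist w C"
  have d0: "d \<ge> 0" unfolding d_def by (rule infdist_nonneg)
  have dle: "\<And>u. u \<in> C \<Longrightarrow> d \<le> dist w u" unfolding d_def by (rule infdist_le)
  have ex: "\<exists>u\<in>C. dist w u < d + 1 / Suc k" for k
  proof (rule ccontr)
    assume "\<not> ?thesis"
    hence "\<forall>u\<in>C. d + 1 / Suc k \<le> dist w u" by auto
    hence "d + 1 / Suc k \<le> infdist w C"
      unfolding infdist_def using assms(1) by (auto intro!: cINF_greatest)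
    thus False unfolding d_def by (simp add: add_pos_pos)
  qed
  then obtain u where uC: "\<And>k. u k \<in> C" and ud: "\<And>k. dist w (u k) < d + 1 / Suc k"
    by metis
  define g where "g k = 2 * ((d + 1 / Suc k)\<^sup>2 - d\<^sup>2)" for k
  have bound: "(norm (u i - u j))\<^sup>2 \<le> g i + g j" for i j
  proof -
    have mid: "(1/2) *\<^sub>R u i + (1/2) *\<^sub>R u j \<in> C"
      using assms(3) uC unfolding convex_def by (metis add_divide_distrib divide_self_if one_add_one zero_le_divide_1_iff zero_le_numeral zero_neq_numeral)
    hence "d \<le> dist w ((1/2) *\<^sub>R u i + (1/2) *\<^sub>R u j)" by (rule dle)
    hence m2: "d\<^sup>2 \<le> (norm (w - ((1/2) *\<^sub>R u i + (1/2) *\<^sub>R u j)))\<^sup>2"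
      using d0 by (simp add: dist_norm power_mono)
    have e: "(w - u i) + (w - u j) = 2 *\<^sub>R (w - ((1/2) *\<^sub>R u i + (1/2) *\<^sub>R u j))"
      by (simp add: algebra_simps scaleR_2)
    have "(norm ((w - u i) + (w - u j)))\<^sup>2 = 4 * (norm (w - ((1/2) *\<^sub>R u i + (1/2) *\<^sub>R u j)))\<^sup>2"
      unfolding e by (simp add: power_mult_distrib)
    moreover have "(norm ((w - u i) - (w - u j)))\<^sup>2 + (norm ((w - u i) + (w - u j)))\<^sup>2 = 2 * (norm (w - u i))\<^sup>2 + 2 * (norm (w - u j))\<^sup>2"
      by (rule parallelo)
    moreover have "(norm (w - u i))\<^sup>2 \<le> (d + 1 / Suc i)\<^sup>2"
      using ud[of i] by (simp add: dist_norm power_mono)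
    moreover have "(norm (w - u j))\<^sup>2 \<le> (d + 1 / Suc j)\<^sup>2"
      using ud[of j] by (simp add: dist_norm power_mono)
    moreover have "(w - u i) - (w - u j) = u j - u i" by simp
    ultimately show ?thesis using m2 unfolding g_def by (simp add: norm_minus_commute)
  qed
  have gl: "g \<longlonglongrightarrow> 0"
  proof -
    have "(\<lambda>k. 1 / real (Suc k)) \<longlonglongrightarrow> 0"
      using LIMSEQ_Suc[OF lim_inverse_n'] by simp
    hence "(\<lambda>k. 2 * ((d + 1 / real (Suc k))\<^sup>2 - d\<^sup>2)) \<longlonglongrightarrow> 2 * ((d + 0)\<^sup>2 - d\<^sup>2)"
      by (intro tendsto_intros)
    thus ?thesis unfolding g_def by simp
  qed
  have "Cauchy u"
  proof (rule metric_CauchyI)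
    fix e :: real assume "e > 0"
    hence "e\<^sup>2 / 2 > 0" by simp
    then obtain N where N: "\<And>k. k \<ge> N \<Longrightarrow> \<bar>g k\<bar> < e\<^sup>2 / 2"
      using LIMSEQ_D[OF gl \<open>e\<^sup>2 / 2 > 0\<close>] by auto
    show "\<exists>M. \<forall>m\<ge>M. \<forall>n\<ge>M. dist (u m) (u n) < e"
    proof (intro exI allI impI)
      fix i j assume "i \<ge> N" "j \<ge> N"
      hence "(norm (u i - u j))\<^sup>2 < e\<^sup>2" using bound[of i j] N[of i] N[of j] by simp
      thus "dist (u i) (u j) < e" using \<open>e > 0\<close> by (simp add: dist_norm power_less_imp_less_base)
    qed
  qed
  then obtain p where p: "u \<longlonglongrightarrow> p" using Cauchy_convergent convergent_def by blast
  have pC: "p \<in> C" using closed_sequentially[OF assms(2)] uC p by blast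
  have "dist w p \<le> d"
  proof (rule LIMSEQ_le)
    show "(\<lambda>k. dist w (u k)) \<longlonglongrightarrow> dist w p" by (intro tendsto_intros p)
    have "(\<lambda>k. 1 / real (Suc k)) \<longlonglongrightarrow> 0"
      using LIMSEQ_Suc[OF lim_inverse_n'] by simp
    hence "(\<lambda>k. d + 1 / real (Suc k)) \<longlonglongrightarrow> d + 0" by (intro tendsto_intros)
    thus "(\<lambda>k. d + 1 / real (Suc k)) \<longlonglongrightarrow> d" by simp
    show "\<exists>N. \<forall>n\<ge>N. dist w (u n) \<le> d + 1 / real (Suc n)" using ud less_imp_le by blast
  qed
  thus ?thesis using pC dle by force
qed

lemma proj_prop:
  fixes C :: "'a::{real_inner,complete_space} set"
  assumes "C \<noteq> {}" "closed C" "convex C" "u \<in> C"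
  shows "metric_proj C w \<in> C" "inner (w - metric_proj C w) (u - metric_proj C w) \<le> 0"
proof -
  obtain p where p: "p \<in> C" "\<forall>u\<in>C. dist w p \<le> dist w u" using proj_exists[OF assms(1-3)] by blast
  have "metric_proj C w = p" unfolding metric_proj_def
    by (rule the_equality) (use p any_closest_point_unique[OF assms(3,2)] in blast)+
  thus "metric_proj C w \<in> C" "inner (w - metric_proj C w) (u - metric_proj C w) \<le> 0"
    using p any_closest_point_dot[OF assms(3,2) p(1) assms(4)] by auto
qed

lemma amgm: fixes D E s :: real assumes "s > 0"
  shows "2 * D * E \<le> D\<^sup>2 / s + s * E\<^sup>2"
proof -
  have "0 \<le> (D - s * E)\<^sup>2 / s" using assms by simp
  also have "(D - s * E)\<^sup>2 / s = D\<^sup>2 / s + s * E\<^sup>2 - 2 * D * E"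
    using assms by (simp add: power2_eq_square field_simps)
  finally show ?thesis by simp
qed

lemma step:
  fixes xm x0 x1 ym y0 z :: "'a::real_inner" and F :: "'a \<Rightarrow> 'a" and lam L m s :: real
  assumes H1: "inner (x0 - lam *\<^sub>R F y0 - x1) (z - x1) \<le> 0"
  and H2: "inner (xm - lam *\<^sub>R F ym - x0) (x1 - x0) \<le> 0"
  and H3: "inner (xm - lam *\<^sub>R F ym - x0) (xm - x0) \<le> 0"
  and H4: "y0 = 2 *\<^sub>R x0 - xm"
  and H5: "inner (F y0 - F z) (y0 - z) \<ge> m * (norm (y0 - z))\<^sup>2"
  and H6: "norm (F y0 - F ym) \<le> L * norm (y0 - ym)"
  and lp: "lam > 0" and Lp: "L > 0" and sp: "s > 0"
  shows "(norm (x1 - z))\<^sup>2 + 2*lam*inner (F z) (x0 - z) + lam*L*(norm(x1 - y0))\<^sup>2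
   \<le> (norm(x0 - z))\<^sup>2 + 2*lam*inner (F z) (xm - z) + lam*L*(norm(x0-ym))\<^sup>2
     - (1 - lam*L/s)*(norm(x0-xm))\<^sup>2 - (1 - lam*L * s - 2*lam*L)*(norm(x1-y0))\<^sup>2
     - 2*lam*inner (F z) (x0 - z) - 2*lam*m*(norm(y0-z))\<^sup>2"
proof -
  let ?D = "norm (x0 - xm)" and ?E = "norm (x1 - y0)" and ?E' = "norm (x0 - ym)"
  have S1: "(norm (x1 - z))\<^sup>2 \<le> (norm (x0 - z))\<^sup>2 - (norm (x1 - x0))\<^sup>2 + 2*lam*inner (F y0) (z - x1)"
  proof -
    have "inner (x0 - lam *\<^sub>R F y0 - x1) (z - x1) = inner (x0 - x1) (z - x1) - lam * inner (F y0) (z - x1)"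
      by (simp add: inner_diff_left)
    moreover have "2 * inner (x0 - x1) (z - x1) = (norm (x0-x1))\<^sup>2 + (norm (z-x1))\<^sup>2 - (norm (x0 - z))\<^sup>2"
      by (rule polar2)
    ultimately show ?thesis using H1 by (simp add: norm_minus_commute)
  qed
  have S2: "?D\<^sup>2 - (norm (x1 - x0))\<^sup>2 + ?E\<^sup>2 \<le> 2*lam*inner (F ym) (x1 - y0)"
  proof -
    have a: "inner (xm - lam *\<^sub>R F ym - x0) (x1 - y0) \<le> 0"
    proof -
      have "x1 - y0 = (x1 - x0) + (xm - x0)" using H4 by (simp add: algebra_simps scaleR_2)
      hence "inner (xm - lam *\<^sub>R F ym - x0) (x1 - y0) = inner (xm - lam *\<^sub>R F ym - x0) (x1 - x0) + inner (xm - lam *\<^sub>R F ym - x0) (xm - x0)"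
        by (simp only: inner_add_right)
      thus ?thesis using H2 H3 by linarith
    qed
    have b: "inner (xm - lam *\<^sub>R F ym - x0) (x1 - y0) = inner (xm - x0) (x1 - y0) - lam * inner (F ym) (x1 - y0)"
      by (simp add: inner_diff_left)
    have c: "2 * inner (xm - x0) (x1 - y0) = ?D\<^sup>2 - (norm (x1 - x0))\<^sup>2 + ?E\<^sup>2"
      unfolding H4 by (simp add: power2_norm_eq_inner inner_diff_left inner_diff_right inner_commute algebra_simps scaleR_2 inner_add_left inner_add_right)
    show ?thesis using a b c by simp
  qed
  have S3: "inner (F y0) (z - x1) = inner (F y0) (z - y0) + inner (F y0 - F ym) (y0 - x1) + inner (F ym) (y0 - x1)"
    by (simp add: inner_diff_left inner_diff_right)
  have S4: "inner (F y0) (z - y0) \<le> - m * (norm (y0 - z))\<^sup>2 - inner (F z) (y0 - z)"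
  proof -
    have "inner (F y0) (z - y0) = - inner (F y0 - F z) (y0 - z) - inner (F z) (y0 - z)"
      by (simp add: inner_diff_left inner_diff_right)
    thus ?thesis using H5 by simp
  qed
  have S5: "inner (F z) (y0 - z) = 2 * inner (F z) (x0 - z) - inner (F z) (xm - z)"
    using H4 by (simp add: inner_diff_right scaleR_2 inner_add_right)
  have S6: "inner (F y0 - F ym) (y0 - x1) \<le> L * (?D + ?E') * ?E"
  proof -
    have "inner (F y0 - F ym) (y0 - x1) \<le> norm (F y0 - F ym) * norm (y0 - x1)"
      by (rule norm_cauchy_schwarz)
    also have "\<dots> \<le> L * norm (y0 - ym) * ?E"
      using H6 by (simp add: mult_right_mono norm_minus_commute)
    also have "norm (y0 - ym) \<le> ?D + ?E'"
    proof -
      have "y0 - ym = (x0 - xm) + (x0 - ym)" using H4 by (simp add: algebra_simps scaleR_2)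
      thus ?thesis by (metis norm_triangle_ineq)
    qed
    hence "L * norm (y0 - ym) * ?E \<le> L * (?D + ?E') * ?E"
      using Lp by (simp add: mult_right_mono mult_left_mono)
    finally show ?thesis .
  qed
  have S7: "2 * ?D * ?E \<le> ?D\<^sup>2 / s + s * ?E\<^sup>2" by (rule amgm[OF sp])
  have S8: "2 * ?E' * ?E \<le> ?E'\<^sup>2 + ?E\<^sup>2" using amgm[of 1 ?E' ?E] by simp
  have S9: "2*lam*inner (F y0 - F ym) (y0 - x1) \<le> lam*L*(?D\<^sup>2 / s + s * ?E\<^sup>2) + lam*L*(?E'\<^sup>2 + ?E\<^sup>2)"
  proof -
    have "2*lam*inner (F y0 - F ym) (y0 - x1) \<le> 2*lam*(L * (?D + ?E') * ?E)"
      using S6 lp by simp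
    also have "\<dots> = lam*L*(2 * ?D * ?E) + lam*L*(2 * ?E' * ?E)" by (simp add: algebra_simps)
    also have "\<dots> \<le> lam*L*(?D\<^sup>2 / s + s * ?E\<^sup>2) + lam*L*(?E'\<^sup>2 + ?E\<^sup>2)"
      using S7 S8 lp Lp by (intro add_mono mult_left_mono) auto
    finally show ?thesis .
  qed
  have S10: "inner (F ym) (y0 - x1) = - inner (F ym) (x1 - y0)"
    by (simp add: inner_diff_right)
  have S4': "2*lam*inner (F y0) (z - y0) \<le> 2*lam*(- m * (norm (y0 - z))\<^sup>2 - inner (F z) (y0 - z))"
    using S4 lp by simp
  have S5': "lam * inner (F z) (y0 - z) = 2 * (lam * inner (F z) (x0 - z)) - lam * inner (F z) (xm - z)"
    unfolding S5 by (simp add: algebra_simps)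
  have S3': "lam * inner (F y0) (z - x1) = lam * inner (F y0) (z - y0) + lam * inner (F y0 - F ym) (y0 - x1) + lam * inner (F ym) (y0 - x1)"
    using S3 by (simp add: algebra_simps)
  have S10': "lam * inner (F ym) (y0 - x1) = - (lam * inner (F ym) (x1 - y0))"
    using S10 by simp
  show ?thesis
    using S1 S2 S3' S4' S5' S9 S10'
    by (simp add: algebra_simps add_divide_distrib diff_divide_distrib)
qed


theorem theorem3p4:
  fixes C :: "'a::{real_inner, complete_space} set"
    and F :: "'a \<Rightarrow> 'a"
    and m L lam :: real
    and x y :: "nat \<Rightarrow> 'a"
    and z :: 'a
  assumes "C \<noteq> {}" and "closed C" and "convex C"
    and "m > 0"
    and "\<And>u v. inner (F u - F v) (u - v) \<ge> m * (norm (u - v))\<^sup>2"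
    and "L > 0"
    and "\<And>u v. norm (F u - F v) \<le> L * norm (u - v)"
    and "z \<in> C" and "\<And>u. u \<in> C \<Longrightarrow> inner (F z) (u - z) \<ge> 0"
    and "0 < lam" and "lam < (sqrt 2 - 1) / L"
    and "x 0 = y 0"
    and "\<And>n. x (Suc n) = metric_proj C (x n - lam *\<^sub>R F (y n))"
    and "\<And>n. y (Suc n) = 2 *\<^sub>R x (Suc n) - x n"
  shows "\<exists>c q. c > 0 \<and> 0 < q \<and> q < 1 \<and> (\<forall>n. norm (x n - z) \<le> c * q ^ n)"
proof -
  note A = assms
  have xC: "x (Suc n) \<in> C" for n
    using proj_prop(1)[OF A(1-3) A(8)] A(13) by simp
  have pr: "inner (x n - lam *\<^sub>R F (y n) - x (Suc n)) (u - x (Suc n)) \<le> 0" if "u \<in> C" for n u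
    using proj_prop(2)[OF A(1-3) that] A(13) by simp
  define r where "r = lam * L"
  have r0: "r > 0" using A(6,10) r_def by simp
  have rlt: "r < sqrt 2 - 1" using A(11) A(6) unfolding r_def by (simp add: pos_less_divide_eq mult.commute)
  have r2: "(r + 1)\<^sup>2 < 2"
  proof -
    have "r + 1 < sqrt 2" using rlt by simp
    hence "(r+1)\<^sup>2 < (sqrt 2)\<^sup>2" using r0 by (intro power_strict_mono) auto
    thus ?thesis by simp
  qed
  have h12: "1 - 2*r > 0"
  proof -
    have "0 < r*r" using r0 by simp
    thus ?thesis using r2 by (simp add: power2_eq_square algebra_simps)
  qed
  define s where "s = sqrt (1 - 2*r)"
  have s0: "s > 0" using h12 s_def by simp
  have ss: "s\<^sup>2 = 1 - 2*r" using h12 s_def by simp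
  have rs: "r < s"
  proof (rule ccontr)
    assume "\<not> r < s" hence "s \<le> r" by simp
    hence "s\<^sup>2 \<le> r\<^sup>2" using s0 by (intro power_mono) auto
    thus False using ss r2 by (simp add: power2_eq_square algebra_simps)
  qed
  define d1 where "d1 = 1 - r / s"
  define d2 where "d2 = 1 - r * s - 2 * r"
  have d1p: "d1 \<ge> 0" using rs s0 unfolding d1_def by (simp add: field_simps)
  have d2p: "d2 > 0"
  proof -
    have "d2 = s * (s - r)" unfolding d2_def using ss by (simp add: power2_eq_square algebra_simps)
    thus ?thesis using s0 rs by simp
  qed
  define psi where "psi n = 2 * lam * inner (F z) (x n - z)" for n
  have psi0: "psi (Suc n) \<ge> 0" for n
    unfolding psi_def using A(9)[OF xC[of n]] A(10) by simp
  define W where "W k = (norm (x (k+2) - z))\<^sup>2 + psi (k+1) + r * (norm (x (k+2) - y (k+1)))\<^sup>2" for k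
  define K where "K = (2 + r) / d2 + 1 / (lam * m) + 1"
  have K1: "K \<ge> 1" using d2p r0 A(4,10) unfolding K_def by simp
  have Wdec: "W (Suc k) \<le> W k - d2 * (norm (x (k+3) - y (k+2)))\<^sup>2 - psi (k+2) - 2*lam*m*(norm (y (k+2) - z))\<^sup>2" for k
  proof -
    have st: "(norm (x (k+3) - z))\<^sup>2 + 2*lam*inner (F z) (x (k+2) - z) + lam*L*(norm(x (k+3) - y (k+2)))\<^sup>2
      \<le> (norm(x (k+2) - z))\<^sup>2 + 2*lam*inner (F z) (x (k+1) - z) + lam*L*(norm(x (k+2) - y (k+1)))\<^sup>2
        - (1 - lam*L/s)*(norm(x (k+2) - x (k+1)))\<^sup>2 - (1 - lam*L * s - 2*lam*L)*(norm(x (k+3) - y (k+2)))\<^sup>2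
        - 2*lam*inner (F z) (x (k+2) - z) - 2*lam*m*(norm(y (k+2) - z))\<^sup>2"
    proof (rule step[where F=F])
      show "inner (x (k+2) - lam *\<^sub>R F (y (k+2)) - x (k+3)) (z - x (k+3)) \<le> 0"
        using pr[OF A(8), of "k+2"] by (simp add: numeral_3_eq_3)
      show "inner (x (k+1) - lam *\<^sub>R F (y (k+1)) - x (k+2)) (x (k+3) - x (k+2)) \<le> 0"
        using pr[OF xC[of "k+2"], of "k+1"] by (simp add: numeral_3_eq_3)
      show "inner (x (k+1) - lam *\<^sub>R F (y (k+1)) - x (k+2)) (x (k+1) - x (k+2)) \<le> 0"
        using pr[OF xC[of k], of "k+1"] by simp
      show "y (k+2) = 2 *\<^sub>R x (k+2) - x (k+1)" using A(14)[of "k+1"] by simp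
      show "inner (F (y (k+2)) - F z) (y (k+2) - z) \<ge> m * (norm (y (k+2) - z))\<^sup>2" by (rule A(5))
      show "norm (F (y (k+2)) - F (y (k+1))) \<le> L * norm (y (k+2) - y (k+1))" by (rule A(7))
    qed (use A(6,10) s0 in auto)
    have "(1 - lam*L/s)*(norm(x (k+2) - x (k+1)))\<^sup>2 \<ge> 0" using d1p unfolding d1_def r_def by simp
    moreover have "W (Suc k) = (norm (x (k+3) - z))\<^sup>2 + 2*lam*inner (F z) (x (k+2) - z) + lam*L*(norm (x (k+3) - y (k+2)))\<^sup>2"
      unfolding W_def psi_def r_def by (simp add: numeral_3_eq_3)
    moreover have "W k = (norm (x (k+2) - z))\<^sup>2 + 2*lam*inner (F z) (x (k+1) - z) + lam*L*(norm (x (k+2) - y (k+1)))\<^sup>2"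
      unfolding W_def psi_def r_def by simp
    moreover have "psi (k+2) = 2*lam*inner (F z) (x (k+2) - z)" unfolding psi_def by simp
    moreover have "d2 * (norm (x (k+3) - y (k+2)))\<^sup>2 = (1 - lam*L * s - 2*lam*L)*(norm(x (k+3) - y (k+2)))\<^sup>2"
      unfolding d2_def r_def by simp
    ultimately show ?thesis using st by linarith
  qed
  have Wbd: "W (Suc k) \<le> K * (d2 * (norm (x (k+3) - y (k+2)))\<^sup>2 + psi (k+2) + 2*lam*m*(norm (y (k+2) - z))\<^sup>2)" for k
  proof -
    let ?E = "norm (x (k+3) - y (k+2))" and ?Y = "norm (y (k+2) - z)"
    have "norm (x (k+3) - z) \<le> ?E + ?Y" using norm_triangle_ineq[of "x (k+3) - y (k+2)" "y (k+2) - z"] by simp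
    hence "(norm (x (k+3) - z))\<^sup>2 \<le> (?E + ?Y)\<^sup>2" by (intro power_mono) auto
    also have "\<dots> \<le> 2 * ?E\<^sup>2 + 2 * ?Y\<^sup>2" using amgm[of 1 ?E ?Y] by (simp add: power2_eq_square algebra_simps)
    finally have a: "(norm (x (k+3) - z))\<^sup>2 \<le> 2 * ?E\<^sup>2 + 2 * ?Y\<^sup>2" .
    have W1: "W (Suc k) \<le> (2 + r) * ?E\<^sup>2 + 2 * ?Y\<^sup>2 + psi (k+2)"
      using a unfolding W_def by (simp add: numeral_3_eq_3 eval_nat_numeral algebra_simps)
    have b1: "(2 + r) * ?E\<^sup>2 \<le> K * (d2 * ?E\<^sup>2)"
    proof -
      have "(2 + r) = ((2+r)/d2) * d2" using d2p by simp
      also have "\<dots> \<le> K * d2" unfolding K_def using d2p A(4,10) by (intro mult_right_mono) auto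
      finally have "2 + r \<le> K * d2" .
      hence "(2 + r) * ?E\<^sup>2 \<le> (K * d2) * ?E\<^sup>2" by (intro mult_right_mono) auto
      thus ?thesis by (simp add: mult.assoc)
    qed
    have b2: "2 * ?Y\<^sup>2 \<le> K * (2*lam*m*?Y\<^sup>2)"
    proof -
      have "1 = (1 / (lam*m)) * (lam*m)" using A(4,10) by simp
      also have "\<dots> \<le> K * (lam*m)" unfolding K_def using d2p r0 A(4,10) by (intro mult_right_mono) auto
      finally have "1 \<le> K * (lam * m)" .
      hence "2 * ?Y\<^sup>2 \<le> (K * (lam*m)) * (2 * ?Y\<^sup>2)" by (simp add: mult_le_cancel_right1)
      thus ?thesis by (simp add: algebra_simps)
    qed
    have b3: "psi (k+2) \<le> K * psi (k+2)" using K1 psi0[of "k+1"] by (simp add: mult_le_cancel_right1)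
    show ?thesis using W1 b1 b2 b3 by (simp add: algebra_simps)
  qed
  define q where "q = K / (K + 1)"
  have q0: "q > 0" "q < 1" using K1 unfolding q_def by auto
  have Wq: "W (Suc k) \<le> q * W k" for k
  proof -
    have "W (Suc k) \<le> W k - W (Suc k) / K"
    proof -
      let ?T = "d2 * (norm (x (k+3) - y (k+2)))\<^sup>2 + psi (k+2) + 2*lam*m*(norm (y (k+2) - z))\<^sup>2"
      have "W (Suc k) / K \<le> ?T" using Wbd[of k] K1 by (simp add: pos_divide_le_eq mult.commute)
      thus ?thesis using Wdec[of k] by linarith
    qed
    hence "W (Suc k) * (K + 1) \<le> W k * K" using K1 by (simp add: field_simps)
    thus ?thesis unfolding q_def using K1 by (simp add: field_simps)
  qed
  have Wk: "W k \<le> q ^ k * W 0" for k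
  proof (induction k)
    case 0 then show ?case by simp
  next
    case (Suc k)
    have "W (Suc k) \<le> q * W k" by (rule Wq)
    also have "\<dots> \<le> q * (q ^ k * W 0)" using Suc q0 by (intro mult_left_mono) auto
    finally show ?case by simp
  qed
  have xW: "(norm (x (k+2) - z))\<^sup>2 \<le> W k" for k
    unfolding W_def using psi0[of k] r0 by simp
  define q' where "q' = sqrt q"
  have q'0: "q' > 0" "q' < 1" using q0 unfolding q'_def by auto
  define W0 where "W0 = max 0 (W 0)"
  have xk: "norm (x (k+2) - z) \<le> sqrt W0 * q' ^ k" for k
  proof -
    have "(norm (x (k+2) - z))\<^sup>2 \<le> q ^ k * W0"
      using xW[of k] Wk[of k] q0 unfolding W0_def
      by (smt (verit, ccfv_SIG) mult_left_mono zero_le_power)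
    hence "norm (x (k+2) - z) \<le> sqrt (q ^ k * W0)" by (simp add: real_le_rsqrt)
    also have "\<dots> = sqrt W0 * q' ^ k" unfolding q'_def by (simp add: real_sqrt_mult real_sqrt_power)
    finally show ?thesis .
  qed
  define c where "c = norm (x 0 - z) + norm (x 1 - z) / q' + sqrt W0 / q'^2 + 1"
  have cp: "c > 0" unfolding c_def using q'0 W0_def by (simp add: add_nonneg_pos)
  show ?thesis
  proof (intro exI conjI)
    show "c > 0" "0 < q'" "q' < 1" using cp q'0 by auto
    show "\<forall>n. norm (x n - z) \<le> c * q' ^ n"
    proof
      fix n :: nat
      let ?G = "norm (x n - z) \<le> c * q' ^ n"
      have "n = 0 \<or> n = 1 \<or> n \<ge> 2" by linarith
      moreover
      { assume "n = 0"
        hence ?G unfolding c_def using q'0 by (simp add: W0_def) }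
      moreover
      { assume n1: "n = 1"
        have "norm (x 1 - z) = (norm (x 1 - z) / q') * q'" using q'0 by simp
        also have "\<dots> \<le> c * q'" unfolding c_def using q'0 W0_def
          by (intro mult_right_mono) auto
        finally have ?G using n1 by simp }
      moreover
      { assume n2: "n \<ge> 2"
        define k where "k = n - 2"
        have nk: "n = k + 2" using n2 k_def by simp
        have "norm (x n - z) \<le> sqrt W0 * q' ^ k" using xk nk by simp
        also have "\<dots> = (sqrt W0 / q'^2) * q' ^ n" using q'0 nk by (simp add: power_add power2_eq_square field_simps)
        also have "\<dots> \<le> c * q' ^ n" unfolding c_def using q'0 W0_def
          by (intro mult_right_mono) auto
        finally have ?G . }
      ultimately show "norm (x n - z) \<le> c * q' ^ n" by blast
    qed
  qed
qed

end
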